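(* Let $C=(c_{k,j})\in\mathbb{R}_{\max}^{p\times n}$, $\mu^+\in\mathbb{Z}_{\ge0}^p$, $\mu^-\in\mathbb{Z}_{\ge0}^n$ with $\sum_{k\in[p]}\mu^+_k=\sum_{j\in[n]}\mu^-_j$, and $f(x)=\sum_{k=1}^p\mu^+_k\max_{j\in[n]}(c_{k,j}+x_j)-\sum_{j=1}^n\mu^-_jx_j$. Then: (1) $f(\alpha\otimes x)=f(x)$ for any $x\in\mathbb{R}_{\max}^n$ and $\alpha\in\mathbb{R}$; (2) $f(x)+f(y)\ge f(x\oplus y)+f(x\oplus' y)$ for any $x,y\in\mathbb{R}_{\max}^n$.
   Context: $\mathbb{R}_{\max}=\mathbb{R}\cup\{-\infty\}$; $\alpha\otimes x$ is the vector with entries $\alpha+x_j$; $x\oplus y$ and $x\oplus' y$ are the entrywise maximum and minimum of $x$ and $y$. The identities are understood for vectors on which $f$ is well defined. *)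

theory Defs
  imports "HOL-Library.Extended_Real"
begin

text \<open>Elements of R_max = R \<union> {-\<infinity>} are modelled as extended reals different from \<infinity>.
  Vectors in R_max^n are functions nat \<Rightarrow> ereal, of which only the entries j < n matter.
  The matrix C in R_max^(p x n) is C :: nat \<Rightarrow> nat \<Rightarrow> ereal (entries k < p, j < n).\<close>

definition tmax :: "(nat \<Rightarrow> ereal) \<Rightarrow> (nat \<Rightarrow> ereal) \<Rightarrow> nat \<Rightarrow> ereal"  (infixl "\<oplus>" 65) where
  "x \<oplus> y = (\<lambda>j. max (x j) (y j))"

definition tmin :: "(nat \<Rightarrow> ereal) \<Rightarrow> (nat \<Rightarrow> ereal) \<Rightarrow> nat \<Rightarrow> ereal"  (infixl "\<oplus>''" 65) where
  "x \<oplus>' y = (\<lambda>j. min (x j) (y j))"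

definition tscale :: "real \<Rightarrow> (nat \<Rightarrow> ereal) \<Rightarrow> nat \<Rightarrow> ereal"  (infixr "\<otimes>" 70) where
  "\<alpha> \<otimes> x = (\<lambda>j. ereal \<alpha> + x j)"

definition rowmax :: "nat \<Rightarrow> (nat \<Rightarrow> nat \<Rightarrow> ereal) \<Rightarrow> nat \<Rightarrow> (nat \<Rightarrow> ereal) \<Rightarrow> ereal" where
  "rowmax n C k x = (SUP j\<in>{..<n}. C k j + x j)"

text \<open>f is well defined at x iff the expression does not contain -\<infinity> - (-\<infinity>), i.e.
  not both some term mu+_k * max_j(...) with mu+_k > 0 equals -\<infinity> and some
  term mu-_j x_j with mu-_j > 0 equals -\<infinity>.\<close>
definition f_welldef :: "nat \<Rightarrow> nat \<Rightarrow> (nat \<Rightarrow> nat \<Rightarrow> ereal) \<Rightarrow> (nat \<Rightarrow> nat) \<Rightarrow> (nat \<Rightarrow> nat)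
    \<Rightarrow> (nat \<Rightarrow> ereal) \<Rightarrow> bool" where
  "f_welldef p n C mup mum x \<longleftrightarrow>
     \<not> ((\<exists>k<p. mup k > 0 \<and> rowmax n C k x = -\<infinity>) \<and> (\<exists>j<n. mum j > 0 \<and> x j = -\<infinity>))"

definition f_val :: "nat \<Rightarrow> nat \<Rightarrow> (nat \<Rightarrow> nat \<Rightarrow> ereal) \<Rightarrow> (nat \<Rightarrow> nat) \<Rightarrow> (nat \<Rightarrow> nat)
    \<Rightarrow> (nat \<Rightarrow> ereal) \<Rightarrow> ereal" where
  "f_val p n C mup mum x =
     (\<Sum>k<p. ereal (real (mup k)) * rowmax n C k x) - (\<Sum>j<n. ereal (real (mum j)) * x j)"

end

theory Submission
  imports Defs
begin


lemma rowmax_ne_inf: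
  assumes "\<forall>j<n. C k j \<noteq> \<infinity>" "\<forall>j<n. x j \<noteq> \<infinity>"
  shows "rowmax n C k x \<noteq> \<infinity>"
proof (cases "n = 0")
  case True then show ?thesis by (simp add: rowmax_def bot_ereal_def)
next
  case False
  let ?S = "(\<lambda>j. C k j + x j) ` {..<n}"
  have "finite ?S" "?S \<noteq> {}" using False by auto
  then have "Sup ?S \<in> ?S" by (metis Max_Sup Max_in)
  then obtain j where "j < n" "rowmax n C k x = C k j + x j" by (auto simp: rowmax_def)
  then show ?thesis using assms by simp
qed

lemma rowmax_scale: "rowmax n C k (\<alpha> \<otimes> x) = ereal \<alpha> + rowmax n C k x"
proof (cases "n = 0")
  case True then show ?thesis by (simp add: rowmax_def bot_ereal_def)
next
  case False
  have "rowmax n C k (\<alpha> \<otimes> x) = (SUP j\<in>{..<n}. ereal \<alpha> + (C k j + x j))"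
    unfolding rowmax_def tscale_def by (simp add: add_ac)
  also have "\<dots> = ereal \<alpha> + rowmax n C k x"
    unfolding rowmax_def using False by (subst SUP_ereal_add_right) auto
  finally show ?thesis .
qed

lemma rowmax_max: "rowmax n C k (x \<oplus> y) = max (rowmax n C k x) (rowmax n C k y)"
proof -
  have "\<And>j. C k j + max (x j) (y j) = max (C k j + x j) (C k j + y j)"
    by (simp add: max_def add_left_mono order.antisym)
  then show ?thesis unfolding rowmax_def tmax_def
    by (simp only: sup_max[symmetric] Complete_Lattices.SUP_sup_distrib)
qed

lemma rowmax_mono: "(\<forall>j<n. x j \<le> y j) \<Longrightarrow> rowmax n C k x \<le> rowmax n C k y"
  unfolding rowmax_def by (intro SUP_mono) (auto intro: add_left_mono)

lemma sum_fin:
  assumes "\<forall>i\<in>A. m i > 0 \<longrightarrow> \<bar>r i\<bar> \<noteq> \<infinity>"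
  shows "(\<Sum>i\<in>A. ereal (real (m i)) * r i) = ereal (\<Sum>i\<in>A. real (m i) * real_of_ereal (r i))"
proof -
  have "(\<Sum>i\<in>A. ereal (real (m i)) * r i) = (\<Sum>i\<in>A. ereal (real (m i) * real_of_ereal (r i)))"
  proof (rule sum.cong)
    fix i assume "i \<in> A"
    show "ereal (real (m i)) * r i = ereal (real (m i) * real_of_ereal (r i))"
    proof (cases "m i = 0")
      case True then show ?thesis by (cases "r i") auto
    next
      case False
      then have "\<bar>r i\<bar> \<noteq> \<infinity>" using assms \<open>i \<in> A\<close> by auto
      then show ?thesis by (metis ereal_real' times_ereal.simps(1))
    qed
  qed simp
  then show ?thesis by simp
qed

lemma sum_notinf:
  assumes "\<forall>i\<in>A. r i \<noteq> \<infinity>"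
  shows "(\<Sum>i\<in>A. ereal (real (m i)) * r i) \<noteq> \<infinity>"
proof -
  have "\<forall>i\<in>A. ereal (real (m i)) * r i \<noteq> \<infinity>"
  proof
    fix i assume "i \<in> A"
    then have "r i \<noteq> \<infinity>" using assms by auto
    then show "ereal (real (m i)) * r i \<noteq> \<infinity>"
      by (cases "r i") (auto simp: zero_ereal_def)
  qed
  then show ?thesis by (simp add: sum_Pinfty)
qed

lemma sum_minf:
  assumes "finite A" "\<forall>i\<in>A. r i \<noteq> \<infinity>" "i \<in> A" "m i > 0" "r i = -\<infinity>"
  shows "(\<Sum>i\<in>A. ereal (real (m i)) * r i) = -\<infinity>"
proof -
  have "(\<Sum>i\<in>A. ereal (real (m i)) * r i) = ereal (real (m i)) * r i + (\<Sum>i\<in>A-{i}. ereal (real (m i)) * r i)"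
    using assms by (simp add: sum.remove)
  moreover have "ereal (real (m i)) * r i = -\<infinity>" using assms by simp
  moreover have "(\<Sum>i\<in>A-{i}. ereal (real (m i)) * r i) \<noteq> \<infinity>"
    using assms by (intro sum_notinf) auto
  ultimately show ?thesis by simp
qed

lemma fv_fin:
  assumes "\<forall>k<p. mup k > 0 \<longrightarrow> \<bar>rowmax n C k z\<bar> \<noteq> \<infinity>" "\<forall>j<n. mum j > 0 \<longrightarrow> \<bar>z j\<bar> \<noteq> \<infinity>"
  shows "f_val p n C mup mum z = ereal ((\<Sum>k<p. real (mup k) * real_of_ereal (rowmax n C k z))
           - (\<Sum>j<n. real (mum j) * real_of_ereal (z j)))"
  unfolding f_val_def using assms by (simp add: sum_fin)

lemma fv_pinf:
  assumes "\<exists>j<n. mum j > 0 \<and> z j = -\<infinity>" "\<forall>j<n. z j \<noteq> \<infinity>"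
  shows "f_val p n C mup mum z = \<infinity>"
proof -
  obtain j where "j < n" "mum j > 0" "z j = -\<infinity>" using assms by auto
  then have "(\<Sum>j<n. ereal (real (mum j)) * z j) = -\<infinity>"
    using assms by (intro sum_minf) auto
  then show ?thesis unfolding f_val_def by simp
qed

lemma fv_minf:
  assumes "\<exists>k<p. mup k > 0 \<and> rowmax n C k z = -\<infinity>" "\<forall>k<p. rowmax n C k z \<noteq> \<infinity>"
    "\<forall>j<n. mum j > 0 \<longrightarrow> \<bar>z j\<bar> \<noteq> \<infinity>"
  shows "f_val p n C mup mum z = -\<infinity>"
proof -
  obtain k where "k < p" "mup k > 0" "rowmax n C k z = -\<infinity>" using assms by auto
  then have "(\<Sum>k<p. ereal (real (mup k)) * rowmax n C k z) = -\<infinity>"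
    using assms by (intro sum_minf) auto
  moreover have "(\<Sum>j<n. ereal (real (mum j)) * z j) = ereal (\<Sum>j<n. real (mum j) * real_of_ereal (z j))"
    using assms by (intro sum_fin) auto
  ultimately show ?thesis unfolding f_val_def by simp
qed

lemma fv_notinf:
  assumes "\<forall>k<p. rowmax n C k z \<noteq> \<infinity>" "\<forall>j<n. mum j > 0 \<longrightarrow> \<bar>z j\<bar> \<noteq> \<infinity>"
  shows "f_val p n C mup mum z \<noteq> \<infinity>"
proof -
  have "(\<Sum>k<p. ereal (real (mup k)) * rowmax n C k z) \<noteq> \<infinity>"
    using assms by (intro sum_notinf) auto
  moreover have "(\<Sum>j<n. ereal (real (mum j)) * z j) = ereal (\<Sum>j<n. real (mum j) * real_of_ereal (z j))"
    using assms by (intro sum_fin) auto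
  ultimately show ?thesis unfolding f_val_def by (cases "(\<Sum>k<p. ereal (real (mup k)) * rowmax n C k z)") auto
qed

lemma fin_add: "\<bar>x\<bar> \<noteq> \<infinity> \<Longrightarrow> \<bar>ereal a + x\<bar> \<noteq> \<infinity>"
  by (cases x) auto

lemma rof_add: "\<bar>x\<bar> \<noteq> \<infinity> \<Longrightarrow> real_of_ereal (ereal a + x) = a + real_of_ereal x"
  by (cases x) auto

lemma part1:
  fixes p n :: nat and C :: "nat \<Rightarrow> nat \<Rightarrow> ereal" and mup mum :: "nat \<Rightarrow> nat"
  assumes C_Rmax: "\<forall>k<p. \<forall>j<n. C k j \<noteq> \<infinity>"
    and balance: "(\<Sum>k<p. mup k) = (\<Sum>j<n. mum j)"
    and xni: "\<forall>j<n. x j \<noteq> \<infinity>" and wd: "f_welldef p n C mup mum x"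
  shows "f_val p n C mup mum (\<alpha> \<otimes> x) = f_val p n C mup mum x"
proof -
  define xa where "xa = \<alpha> \<otimes> x"
  have xa: "\<And>j. xa j = ereal \<alpha> + x j" unfolding xa_def tscale_def by simp
  have Rxa: "\<And>k. rowmax n C k xa = ereal \<alpha> + rowmax n C k x" unfolding xa_def by (rule rowmax_scale)
  have Rx_ni: "\<forall>k<p. rowmax n C k x \<noteq> \<infinity>" using C_Rmax xni rowmax_ne_inf[of n C _ x] by blast
  have xa_ni: "\<forall>j<n. xa j \<noteq> \<infinity>" using xni xa by auto
  have Rxa_ni: "\<forall>k<p. rowmax n C k xa \<noteq> \<infinity>" using C_Rmax xa_ni rowmax_ne_inf[of n C _ xa] by blast
  have "f_val p n C mup mum xa = f_val p n C mup mum x"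
  proof (cases "\<exists>k<p. mup k > 0 \<and> rowmax n C k x = -\<infinity>")
    case True
    then have xf: "\<forall>j<n. mum j > 0 \<longrightarrow> \<bar>x j\<bar> \<noteq> \<infinity>" using wd xni unfolding f_welldef_def by auto
    then have xaf: "\<forall>j<n. mum j > 0 \<longrightarrow> \<bar>xa j\<bar> \<noteq> \<infinity>" using xa fin_add by auto
    have "\<exists>k<p. mup k > 0 \<and> rowmax n C k xa = -\<infinity>" using True Rxa by auto
    then have "f_val p n C mup mum xa = -\<infinity>" using Rxa_ni xaf by (intro fv_minf) auto
    moreover have "f_val p n C mup mum x = -\<infinity>" using True Rx_ni xf by (intro fv_minf) auto
    ultimately show ?thesis by simp
  next
    case False
    then have Rf: "\<forall>k<p. mup k > 0 \<longrightarrow> \<bar>rowmax n C k x\<bar> \<noteq> \<infinity>" using Rx_ni by auto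
    then have Raf: "\<forall>k<p. mup k > 0 \<longrightarrow> \<bar>rowmax n C k xa\<bar> \<noteq> \<infinity>" using Rxa fin_add by auto
    show ?thesis
    proof (cases "\<exists>j<n. mum j > 0 \<and> x j = -\<infinity>")
      case True
      then have "\<exists>j<n. mum j > 0 \<and> xa j = -\<infinity>" using xa by auto
      then show ?thesis using True fv_pinf xni xa_ni by metis
    next
      case False
      then have xf: "\<forall>j<n. mum j > 0 \<longrightarrow> \<bar>x j\<bar> \<noteq> \<infinity>" using xni by auto
      then have xaf: "\<forall>j<n. mum j > 0 \<longrightarrow> \<bar>xa j\<bar> \<noteq> \<infinity>" using xa fin_add by auto
      have bal: "(\<Sum>k<p. real (mup k)) = (\<Sum>j<n. real (mum j))"
        using balance by (metis of_nat_sum)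
      have s1: "(\<Sum>k<p. real (mup k) * real_of_ereal (rowmax n C k xa))
          = \<alpha> * (\<Sum>k<p. real (mup k)) + (\<Sum>k<p. real (mup k) * real_of_ereal (rowmax n C k x))"
      proof -
        have "(\<Sum>k<p. real (mup k) * real_of_ereal (rowmax n C k xa))
          = (\<Sum>k<p. real (mup k) * (\<alpha> + real_of_ereal (rowmax n C k x)))"
        proof (rule sum.cong)
          fix k assume "k \<in> {..<p}"
          then show "real (mup k) * real_of_ereal (rowmax n C k xa) = real (mup k) * (\<alpha> + real_of_ereal (rowmax n C k x))"
            using Rf Rxa rof_add by (cases "mup k = 0") auto
        qed simp
        then show ?thesis by (simp add: sum.distrib sum_distrib_left algebra_simps)
      qed
      have s2: "(\<Sum>j<n. real (mum j) * real_of_ereal (xa j))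
          = \<alpha> * (\<Sum>j<n. real (mum j)) + (\<Sum>j<n. real (mum j) * real_of_ereal (x j))"
      proof -
        have "(\<Sum>j<n. real (mum j) * real_of_ereal (xa j))
          = (\<Sum>j<n. real (mum j) * (\<alpha> + real_of_ereal (x j)))"
        proof (rule sum.cong)
          fix j assume "j \<in> {..<n}"
          then show "real (mum j) * real_of_ereal (xa j) = real (mum j) * (\<alpha> + real_of_ereal (x j))"
            using xf xa rof_add by (cases "mum j = 0") auto
        qed simp
        then show ?thesis by (simp add: sum.distrib sum_distrib_left algebra_simps)
      qed
      show ?thesis using fv_fin[OF Rf xf] fv_fin[OF Raf xaf] s1 s2 bal by simp
    qed
  qed
  then show ?thesis by (simp add: xa_def)
qed

lemma rof_maxmin: "\<bar>a\<bar> \<noteq> \<infinity> \<Longrightarrow> \<bar>b\<bar> \<noteq> \<infinity> \<Longrightarrow>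
   real_of_ereal (max a b) + real_of_ereal (min a b) = real_of_ereal a + real_of_ereal (b::ereal)"
  by (cases a; cases b) (auto simp: max_def min_def)

lemma rof_sub: "\<bar>a\<bar> \<noteq> \<infinity> \<Longrightarrow> \<bar>b\<bar> \<noteq> \<infinity> \<Longrightarrow> \<bar>c\<bar> \<noteq> \<infinity> \<Longrightarrow> c \<le> a \<Longrightarrow> c \<le> b \<Longrightarrow>
   real_of_ereal (max a b) + real_of_ereal c \<le> real_of_ereal a + real_of_ereal (b::ereal)"
  by (cases a; cases b; cases c) (auto simp: max_def min_def)

lemma fin_max: "\<bar>a\<bar> \<noteq> \<infinity> \<Longrightarrow> \<bar>b\<bar> \<noteq> \<infinity> \<Longrightarrow> \<bar>max a (b::ereal)\<bar> \<noteq> \<infinity>"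
  by (cases a; cases b) (auto simp: max_def min_def)
lemma fin_min: "\<bar>a\<bar> \<noteq> \<infinity> \<Longrightarrow> \<bar>b\<bar> \<noteq> \<infinity> \<Longrightarrow> \<bar>min a (b::ereal)\<bar> \<noteq> \<infinity>"
  by (cases a; cases b) (auto simp: max_def min_def)

lemma part2:
  fixes p n :: nat and C :: "nat \<Rightarrow> nat \<Rightarrow> ereal" and mup mum :: "nat \<Rightarrow> nat"
  assumes C_Rmax: "\<forall>k<p. \<forall>j<n. C k j \<noteq> \<infinity>"
    and xni: "\<forall>j<n. x j \<noteq> \<infinity>" and yni: "\<forall>j<n. y j \<noteq> \<infinity>"
    and wdx: "f_welldef p n C mup mum x" and wdy: "f_welldef p n C mup mum y"
  shows "f_val p n C mup mum x + f_val p n C mup mum y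
                \<ge> f_val p n C mup mum (x \<oplus> y) + f_val p n C mup mum (x \<oplus>' y)"
proof -
  define u where "u = x \<oplus> y"
  define v where "v = x \<oplus>' y"
  have u: "\<And>j. u j = max (x j) (y j)" unfolding u_def tmax_def by simp
  have v: "\<And>j. v j = min (x j) (y j)" unfolding v_def tmin_def by simp
  have uni: "\<forall>j<n. u j \<noteq> \<infinity>" using xni yni u by (auto simp: max_def)
  have vni: "\<forall>j<n. v j \<noteq> \<infinity>" using xni yni v by (auto simp: min_def)
  have Rx_ni: "\<forall>k<p. rowmax n C k x \<noteq> \<infinity>" using C_Rmax xni rowmax_ne_inf[of n C _ x] by blast
  have Ry_ni: "\<forall>k<p. rowmax n C k y \<noteq> \<infinity>" using C_Rmax yni rowmax_ne_inf[of n C _ y] by blast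
  have Ru_ni: "\<forall>k<p. rowmax n C k u \<noteq> \<infinity>" using C_Rmax uni rowmax_ne_inf[of n C _ u] by blast
  have Rv_ni: "\<forall>k<p. rowmax n C k v \<noteq> \<infinity>" using C_Rmax vni rowmax_ne_inf[of n C _ v] by blast
  have Ru: "\<And>k. rowmax n C k u = max (rowmax n C k x) (rowmax n C k y)"
    unfolding u_def by (rule rowmax_max)
  have Rvx: "\<And>k. rowmax n C k v \<le> rowmax n C k x" using v by (intro rowmax_mono) auto
  have Rvy: "\<And>k. rowmax n C k v \<le> rowmax n C k y" using v by (intro rowmax_mono) auto
  have "f_val p n C mup mum u + f_val p n C mup mum v \<le> f_val p n C mup mum x + f_val p n C mup mum y"
  proof (cases "\<exists>j<n. mum j > 0 \<and> (x j = -\<infinity> \<or> y j = -\<infinity>)")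
    case True
    then have "f_val p n C mup mum x = \<infinity> \<or> f_val p n C mup mum y = \<infinity>"
      using fv_pinf xni yni by metis
    then show ?thesis by auto
  next
    case False
    then have xf: "\<forall>j<n. mum j > 0 \<longrightarrow> \<bar>x j\<bar> \<noteq> \<infinity>" and yf: "\<forall>j<n. mum j > 0 \<longrightarrow> \<bar>y j\<bar> \<noteq> \<infinity>"
      using xni yni by auto
    have uf: "\<forall>j<n. mum j > 0 \<longrightarrow> \<bar>u j\<bar> \<noteq> \<infinity>" using xf yf u fin_max by metis
    have vf: "\<forall>j<n. mum j > 0 \<longrightarrow> \<bar>v j\<bar> \<noteq> \<infinity>" using xf yf v fin_min by metis
    show ?thesis
    proof (cases "\<exists>k<p. mup k > 0 \<and> rowmax n C k v = -\<infinity>")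
      case True
      then have "f_val p n C mup mum v = -\<infinity>" using Rv_ni vf by (intro fv_minf) auto
      moreover have "f_val p n C mup mum u \<noteq> \<infinity>" using Ru_ni uf by (intro fv_notinf) auto
      ultimately have "f_val p n C mup mum u + f_val p n C mup mum v = -\<infinity>"
        by (cases "f_val p n C mup mum u") auto
      then show ?thesis by (rule ord_eq_le_trans) simp
    next
      case False
      then have Rvf: "\<forall>k<p. mup k > 0 \<longrightarrow> \<bar>rowmax n C k v\<bar> \<noteq> \<infinity>" using Rv_ni by auto
      have Rxf: "\<forall>k<p. mup k > 0 \<longrightarrow> \<bar>rowmax n C k x\<bar> \<noteq> \<infinity>"
      proof (intro allI impI)
        fix k assume "k < p" "mup k > 0"
        then show "\<bar>rowmax n C k x\<bar> \<noteq> \<infinity>" using Rvf Rx_ni Rvx[of k]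
          by (cases "rowmax n C k v"; cases "rowmax n C k x") auto
      qed
      have Ryf: "\<forall>k<p. mup k > 0 \<longrightarrow> \<bar>rowmax n C k y\<bar> \<noteq> \<infinity>"
      proof (intro allI impI)
        fix k assume "k < p" "mup k > 0"
        then show "\<bar>rowmax n C k y\<bar> \<noteq> \<infinity>" using Rvf Ry_ni Rvy[of k]
          by (cases "rowmax n C k v"; cases "rowmax n C k y") auto
      qed
      have Ruf: "\<forall>k<p. mup k > 0 \<longrightarrow> \<bar>rowmax n C k u\<bar> \<noteq> \<infinity>" using Rxf Ryf Ru fin_max by metis
      have sA: "(\<Sum>k<p. real (mup k) * real_of_ereal (rowmax n C k u))
              + (\<Sum>k<p. real (mup k) * real_of_ereal (rowmax n C k v))
             \<le> (\<Sum>k<p. real (mup k) * real_of_ereal (rowmax n C k x))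
              + (\<Sum>k<p. real (mup k) * real_of_ereal (rowmax n C k y))"
      proof -
        have "(\<Sum>k<p. real (mup k) * real_of_ereal (rowmax n C k u) + real (mup k) * real_of_ereal (rowmax n C k v))
           \<le> (\<Sum>k<p. real (mup k) * real_of_ereal (rowmax n C k x) + real (mup k) * real_of_ereal (rowmax n C k y))"
        proof (rule sum_mono)
          fix k assume k: "k \<in> {..<p}"
          show "real (mup k) * real_of_ereal (rowmax n C k u) + real (mup k) * real_of_ereal (rowmax n C k v)
           \<le> real (mup k) * real_of_ereal (rowmax n C k x) + real (mup k) * real_of_ereal (rowmax n C k y)"
          proof (cases "mup k = 0")
            case False
            then have "real_of_ereal (rowmax n C k u) + real_of_ereal (rowmax n C k v)
                \<le> real_of_ereal (rowmax n C k x) + real_of_ereal (rowmax n C k y)"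
              using k Rxf Ryf Rvf Rvx[of k] Rvy[of k] Ru[of k] rof_sub by auto
            then have "real (mup k) * (real_of_ereal (rowmax n C k u) + real_of_ereal (rowmax n C k v))
                \<le> real (mup k) * (real_of_ereal (rowmax n C k x) + real_of_ereal (rowmax n C k y))"
              by (intro mult_left_mono) auto
            then show ?thesis by (simp add: algebra_simps)
          qed simp
        qed
        then show ?thesis by (simp add: sum.distrib)
      qed
      have sB: "(\<Sum>j<n. real (mum j) * real_of_ereal (u j)) + (\<Sum>j<n. real (mum j) * real_of_ereal (v j))
          = (\<Sum>j<n. real (mum j) * real_of_ereal (x j)) + (\<Sum>j<n. real (mum j) * real_of_ereal (y j))"
      proof -
        have "(\<Sum>j<n. real (mum j) * real_of_ereal (u j) + real (mum j) * real_of_ereal (v j))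
            = (\<Sum>j<n. real (mum j) * real_of_ereal (x j) + real (mum j) * real_of_ereal (y j))"
        proof (rule sum.cong)
          fix j assume j: "j \<in> {..<n}"
          show "real (mum j) * real_of_ereal (u j) + real (mum j) * real_of_ereal (v j)
              = real (mum j) * real_of_ereal (x j) + real (mum j) * real_of_ereal (y j)"
          proof (cases "mum j = 0")
            case False
            then have "real_of_ereal (u j) + real_of_ereal (v j) = real_of_ereal (x j) + real_of_ereal (y j)"
              using j xf yf u v rof_maxmin by auto
            then show ?thesis by (metis distrib_left)
          qed simp
        qed simp
        then show ?thesis by (simp add: sum.distrib)
      qed
      show ?thesis using fv_fin[OF Rxf xf] fv_fin[OF Ryf yf] fv_fin[OF Ruf uf] fv_fin[OF Rvf vf] sA sB
        by simp
    qed
  qed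
  then show ?thesis by (simp add: u_def v_def)
qed



theorem corollary3p2:
  fixes p n :: nat and C :: "nat \<Rightarrow> nat \<Rightarrow> ereal" and mup mum :: "nat \<Rightarrow> nat"
  assumes C_Rmax: "\<forall>k<p. \<forall>j<n. C k j \<noteq> \<infinity>"
    and balance: "(\<Sum>k<p. mup k) = (\<Sum>j<n. mum j)"
  shows "(\<forall>x (\<alpha>::real). (\<forall>j<n. x j \<noteq> \<infinity>) \<longrightarrow> f_welldef p n C mup mum x
            \<longrightarrow> f_val p n C mup mum (\<alpha> \<otimes> x) = f_val p n C mup mum x)
       \<and> (\<forall>x y. (\<forall>j<n. x j \<noteq> \<infinity>) \<longrightarrow> (\<forall>j<n. y j \<noteq> \<infinity>)
            \<longrightarrow> f_welldef p n C mup mum x \<longrightarrow> f_welldef p n C mup mum y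
            \<longrightarrow> f_welldef p n C mup mum (x \<oplus> y) \<longrightarrow> f_welldef p n C mup mum (x \<oplus>' y)
            \<longrightarrow> f_val p n C mup mum x + f_val p n C mup mum y
                \<ge> f_val p n C mup mum (x \<oplus> y) + f_val p n C mup mum (x \<oplus>' y))"
    using part1[OF C_Rmax balance] part2[OF C_Rmax] by blast

end
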